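(* Let $p$ be an odd prime, $q\in\mathbb{C}_p$ with $|q-1|_p<1$, $\alpha\in\mathbb{N}\cup\{0\}$, $h\in\mathbb{N}$, and let $n_1,n_2,k$ be nonnegative integers with $n_1+n_2>2k$. Then \[ \sum_{l=0}^{n_1+n_2-2k}\binom{n_1+n_2-2k}{l}(-1)^l\frac{\widetilde{G}_{l+2k+1,q}^{(\alpha,h)}}{l+2k+1}=\begin{cases}[2]_q+q^{h+1}\dfrac{\widetilde{G}_{n_1+n_2+1,q^{-1}}^{(\alpha,h)}}{n_1+n_2+1} & \text{if } k=0,\\[2mm] \displaystyle\sum_{l=0}^{2k}\binom{2k}{l}(-1)^{2k+l}\Big\{[2]_q+q^{h+1}\frac{\widetilde{G}_{n_1+n_2-l+1,q^{-1}}^{(\alpha,h)}}{n_1+n_2-l+1}\Big\} & \text{if } k\neq 0.\end{cases} \]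
   Context: For $x\in\mathbb{Z}_p$ write $[x]_q=\frac{1-q^x}{1-q}$, and $[2]_q=1+q$. For a uniformly differentiable $f:\mathbb{Z}_p\to\mathbb{C}_p$, the fermionic $p$-adic $q$-integral is $\int_{\mathbb{Z}_p}f(\xi)\,d\mu_{-q}(\xi)=\lim_{N\to\infty}\frac{1}{[p^N]_{-q}}\sum_{\xi=0}^{p^N-1}f(\xi)(-q)^{\xi}$, with $[p^N]_{-q}=\frac{1+q^{p^N}}{1+q}$. The $(h,q)$-Genocchi polynomials with weight $\alpha$ are defined for $n\ge0$, $x\in\mathbb{Z}_p$ by $\frac{\widetilde{G}_{n+1,q}^{(\alpha,h)}(x)}{n+1}=\int_{\mathbb{Z}_p}q^{(h-1)\xi}[x+\xi]_{q^{\alpha}}^n\,d\mu_{-q}(\xi)$, and the numbers are $\widetilde{G}_{n,q}^{(\alpha,h)}=\widetilde{G}_{n,q}^{(\alpha,h)}(0)$. The numbers $\widetilde{G}_{n,q^{-1}}^{(\alpha,h)}$ are obtained by replacing $q$ by $q^{-1}$ everywhere: $\frac{\widetilde{G}_{n+1,q^{-1}}^{(\alpha,h)}}{n+1}=\int_{\mathbb{Z}_p}q^{(1-h)\xi}[\xi]_{q^{-\alpha}}^n\,d\mu_{-q^{-1}}(\xi)$. *)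

theory Defs
  imports Complex_Main "HOL-Computational_Algebra.Polynomial"
begin

text \<open>An abstract model of C_p: a field of characteristic 0 with a complete,
  non-archimedean absolute value extending the p-adic absolute value on Q,
  which is algebraically closed.  C_p is such a field.\<close>

definition abs_conv :: "('a::field \<Rightarrow> real) \<Rightarrow> (nat \<Rightarrow> 'a) \<Rightarrow> 'a \<Rightarrow> bool" where
  "abs_conv absv s L \<longleftrightarrow> (\<forall>e>0. \<exists>M. \<forall>N\<ge>M. absv (s N - L) < e)"

definition abs_cauchy :: "('a::field \<Rightarrow> real) \<Rightarrow> (nat \<Rightarrow> 'a) \<Rightarrow> bool" where
  "abs_cauchy absv s \<longleftrightarrow> (\<forall>e>0. \<exists>M. \<forall>m\<ge>M. \<forall>n\<ge>M. absv (s m - s n) < e)"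

definition Cp_like :: "nat \<Rightarrow> ('a::field_char_0 \<Rightarrow> real) \<Rightarrow> bool" where
  "Cp_like p absv \<longleftrightarrow>
     (\<forall>x. absv x \<ge> 0) \<and> (\<forall>x. absv x = 0 \<longleftrightarrow> x = 0) \<and>
     (\<forall>x y. absv (x * y) = absv x * absv y) \<and>
     (\<forall>x y. absv (x + y) \<le> max (absv x) (absv y)) \<and>
     absv (of_nat p) = inverse (real p) \<and>
     (\<forall>s. abs_cauchy absv s \<longrightarrow> (\<exists>L. abs_conv absv s L)) \<and>
     (\<forall>P::'a poly. degree P > 0 \<longrightarrow> (\<exists>x. poly P x = 0))"

text \<open>q-number [x]_q for natural x, i.e. (1 - q^x)/(1 - q) (= x when q = 1).\<close>
definition qnum :: "'a::field \<Rightarrow> nat \<Rightarrow> 'a" where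
  "qnum q x = (\<Sum>i<x. q ^ i)"

text \<open>Fermionic p-adic q-integral: limit of
  1/[p^N]_{-q} * sum_{xi < p^N} f xi (-q)^xi, limit w.r.t. absv.\<close>
definition ferm_int :: "nat \<Rightarrow> ('a::field_char_0 \<Rightarrow> real) \<Rightarrow> 'a \<Rightarrow> (nat \<Rightarrow> 'a) \<Rightarrow> 'a" where
  "ferm_int p absv q f = (THE L. abs_conv absv
      (\<lambda>N. (\<Sum>\<xi><p ^ N. f \<xi> * (- q) ^ \<xi>) / ((1 + q ^ (p ^ N)) / (1 + q))) L)"

fun hq_genocchi :: "nat \<Rightarrow> ('a::field_char_0 \<Rightarrow> real) \<Rightarrow> nat \<Rightarrow> nat \<Rightarrow> 'a \<Rightarrow> nat \<Rightarrow> 'a" where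
  "hq_genocchi p absv \<alpha> h q 0 = 0"
| "hq_genocchi p absv \<alpha> h q (Suc n) =
     of_nat (Suc n) * ferm_int p absv q (\<lambda>\<xi>. q ^ ((h - 1) * \<xi>) * (qnum (q ^ \<alpha>) \<xi>) ^ n)"

end

theory Submission
  imports Defs
begin


locale cpl =
  fixes p :: nat and absv :: "'a::field_char_0 \<Rightarrow> real"
  assumes nn: "\<And>x. absv x \<ge> 0"
    and z: "\<And>x. absv x = 0 \<longleftrightarrow> x = 0"
    and mu: "\<And>x y. absv (x * y) = absv x * absv y"
    and ul: "\<And>x y. absv (x + y) \<le> max (absv x) (absv y)"
    and ap: "absv (of_nat p) = inverse (real p)"
    and p1: "p > 1" and podd: "odd p"
begin

lemma a1[simp]: "absv 1 = 1"
proof -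
  have "absv 1 = absv 1 * absv 1" using mu[of 1 1] by simp
  moreover have "absv 1 \<noteq> 0" using z by simp
  ultimately show ?thesis by simp
qed

lemma a0[simp]: "absv 0 = 0" using z by simp

lemma am1[simp]: "absv (-1) = 1"
proof -
  have "absv (-1) * absv (-1) = 1" using mu[of "-1" "-1"] by simp
  then have "(absv (-1) - 1) * (absv (-1) + 1) = 0" by (simp add: algebra_simps)
  with nn[of "-1"] show ?thesis by (smt (verit) mult_eq_0_iff)
qed

lemma aneg[simp]: "absv (- x) = absv x"
  using mu[of "-1" x] by simp

lemma acomm: "absv (x - y) = absv (y - x)"
  using aneg[of "x - y"] by simp

lemma tri: "absv (x + y) \<le> absv x + absv y"
  using ul[of x y] nn[of x] nn[of y] by linarith

lemma ul_diff: "absv (x - y) \<le> max (absv x) (absv y)"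
  using ul[of x "-y"] by simp

lemma apow: "absv (x ^ n) = absv x ^ n"
  by (induction n) (auto simp: mu)

lemma anat: "absv (of_nat n) \<le> 1"
proof (induction n)
  case (Suc n) then show ?case using ul[of 1 "of_nat n"] by (simp add: add.commute)
qed simp

lemma asum: assumes "\<And>i. i \<in> A \<Longrightarrow> absv (f i) \<le> B" "0 \<le> B"
  shows "absv (sum f A) \<le> B"
  using assms
proof (induction A rule: infinite_finite_induct)
  case (insert x F) then show ?case using ul[of "f x" "sum f F"] by (smt (verit) insert_iff max_def sum.insert)
qed auto

lemma ainv: "absv (inverse x) = inverse (absv x)"
proof (cases "x = 0")
  case False
  then have "absv (inverse x) * absv x = 1" using mu[of "inverse x" x] by simp
  moreover have "absv x \<noteq> 0" using False z by simp
  ultimately show ?thesis by (simp add: field_simps)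
qed simp

lemma adiv: "absv (x / y) = absv x / absv y"
  by (simp add: divide_inverse mu ainv)

lemma ultra_eq: assumes "absv y < absv x" shows "absv (x + y) = absv x"
proof -
  have 1: "absv (x + y) \<le> absv x" using ul[of x y] assms by simp
  have "absv x \<le> max (absv (x + y)) (absv (-y))" using ul[of "x + y" "-y"] by simp
  then have "absv x \<le> absv (x + y)" using assms by auto
  with 1 show ?thesis by simp
qed

lemma a2: "absv (2::'a) = 1"
proof -
  obtain j where pj: "p = 2 * j + 1" using podd oddE by blast
  have "(1::'a) = of_nat p - 2 * of_nat j" using pj by simp
  then have "absv (1::'a) \<le> max (absv (of_nat p)) (absv (2 * of_nat j))"
    using ul_diff by metis
  then have "1 \<le> max (inverse (real p)) (absv (2::'a) * absv (of_nat j :: 'a))"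
    by (simp add: ap mu)
  moreover have "inverse (real p) < 1" using p1 by (simp add: inverse_less_1_iff)
  ultimately have "1 \<le> absv (2::'a) * absv (of_nat j :: 'a)" by linarith
  moreover have "absv (of_nat j :: 'a) \<le> 1" by (rule anat)
  moreover have "absv (2::'a) \<le> 1" using anat[of 2] by simp
  ultimately show ?thesis using nn[of "2::'a"] nn[of "of_nat j :: 'a"]
    by (smt (verit) mult_left_le)
qed

lemma near1: assumes "absv (x - 1) < 1" shows "absv x = 1"
  using ultra_eq[of "x - 1" 1] assms by simp

lemma near1_plus: assumes "absv (x - 1) < 1" shows "absv (1 + x) = 1"
  using ultra_eq[of "x - 1" 2] assms a2 by (simp add: algebra_simps)

lemma near1_mult: assumes "absv (x - 1) < 1" "absv (y - 1) < 1"
  shows "absv (x * y - 1) < 1"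
proof -
  have "x * y - 1 = x * (y - 1) + (x - 1)" by (simp add: algebra_simps)
  then have "absv (x * y - 1) \<le> max (absv (x * (y - 1))) (absv (x - 1))" using ul by metis
  then show ?thesis using assms near1[OF assms(1)] by (simp add: mu)
qed

lemma near1_pow: assumes "absv (x - 1) < 1" shows "absv (x ^ n - 1) < 1"
  by (induction n) (auto intro: near1_mult[OF assms])

lemma near1_inv: assumes "absv (x - 1) < 1" shows "absv (inverse x - 1) < 1"
proof -
  have x0: "x \<noteq> 0" using near1[OF assms] by auto
  have "inverse x - 1 = (1 - x) / x" using x0 by (simp add: field_simps)
  then show ?thesis using assms near1[OF assms] by (simp add: adiv acomm)
qed

end


lemma sandw: fixes f g :: "nat \<Rightarrow> real"
  assumes "eventually (\<lambda>N. f N \<le> g N) sequentially" "\<And>N. 0 \<le> f N" "g \<longlonglongrightarrow> 0"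
  shows "f \<longlonglongrightarrow> 0"
  by (rule tendsto_sandwich[of "\<lambda>_. 0" f sequentially g 0]) (use assms in auto)

context cpl begin

lemma abs_absv[simp]: "\<bar>absv x\<bar> = absv x" using nn[of x] by simp

lemma conv_iff: "abs_conv absv s L \<longleftrightarrow> (\<lambda>N. absv (s N - L)) \<longlonglongrightarrow> 0"
  unfolding abs_conv_def LIMSEQ_def dist_real_def by simp

lemma conv_const: "abs_conv absv (\<lambda>N. c) c"
  unfolding conv_iff by simp

lemma conv_add: assumes "abs_conv absv a A" "abs_conv absv b B"
  shows "abs_conv absv (\<lambda>N. a N + b N) (A + B)"
proof -
  have t: "(\<lambda>N. absv (a N - A) + absv (b N - B)) \<longlonglongrightarrow> 0"
    using tendsto_add[OF assms[unfolded conv_iff]] by simp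
  have le:  "absv (a N + b N - (A + B)) \<le> absv (a N - A) + absv (b N - B)" for N
  proof -
    have e: "a N + b N - (A + B) = (a N - A) + (b N - B)" by simp
    show ?thesis unfolding e by (rule tri)
  qed
  show ?thesis unfolding conv_iff
    by (rule sandw[OF always_eventually _ t]) (auto simp: le nn)
qed

lemma conv_neg: assumes "abs_conv absv a A" shows "abs_conv absv (\<lambda>N. - a N) (- A)"
proof -
  have "absv (- a N - - A) = absv (a N - A)" for N
    using aneg[of "a N - A"] by simp
  then show ?thesis using assms unfolding conv_iff by simp
qed

lemma conv_diff: assumes "abs_conv absv a A" "abs_conv absv b B"
  shows "abs_conv absv (\<lambda>N. a N - b N) (A - B)"
  using conv_add[OF assms(1) conv_neg[OF assms(2)]] by simp

lemma conv_mult: assumes "abs_conv absv a A" "abs_conv absv b B"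
  shows "abs_conv absv (\<lambda>N. a N * b N) (A * B)"
proof -
  have e: "a N * b N - A * B = (a N - A) * (b N - B) + A * (b N - B) + B * (a N - A)" for N
    by (simp add: algebra_simps)
  have le: "absv (a N * b N - A * B) \<le> absv (a N - A) * absv (b N - B) + absv A * absv (b N - B) + absv B * absv (a N - A)" for N
    unfolding e using tri[of "(a N - A) * (b N - B) + A * (b N - B)" "B * (a N - A)"]
      tri[of "(a N - A) * (b N - B)" "A * (b N - B)"] by (simp add: mu)
  have t: "(\<lambda>N. absv (a N - A) * absv (b N - B) + absv A * absv (b N - B) + absv B * absv (a N - A)) \<longlonglongrightarrow> 0 * 0 + absv A * 0 + absv B * 0"
    using assms[unfolded conv_iff] by (intro tendsto_intros)
  show ?thesis unfolding conv_iff
    by (rule sandw[OF always_eventually _ t[simplified]]) (auto simp: le nn)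
qed

lemma conv_cmult: assumes "abs_conv absv a A" shows "abs_conv absv (\<lambda>N. c * a N) (c * A)"
  using conv_mult[OF conv_const assms] .

lemma conv_pow: assumes "abs_conv absv a A" shows "abs_conv absv (\<lambda>N. a N ^ n) (A ^ n)"
  by (induction n) (auto intro: conv_mult assms conv_const)

lemma conv_sum: assumes "\<And>i. i \<in> I \<Longrightarrow> abs_conv absv (\<lambda>N. a i N) (A i)"
  shows "abs_conv absv (\<lambda>N. \<Sum>i\<in>I. a i N) (\<Sum>i\<in>I. A i)"
  using assms
proof (induction I rule: infinite_finite_induct)
  case (insert x F) then show ?case by (simp add: conv_add)
qed (auto intro: conv_const)

lemma conv_inverse: assumes "abs_conv absv a A" "A \<noteq> 0"
  shows "abs_conv absv (\<lambda>N. inverse (a N)) (inverse A)"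
proof -
  have pA: "absv A > 0" using assms(2) z nn by (metis less_eq_real_def)
  from assms(1)[unfolded conv_iff] have "eventually (\<lambda>N. absv (a N - A) < absv A) sequentially"
    using order_tendstoD(2)[OF _ pA] by blast
  then have ev: "eventually (\<lambda>N. absv (inverse (a N) - inverse A) \<le> absv (a N - A) / (absv A * absv A)) sequentially"
  proof (rule eventually_mono)
    fix N assume h: "absv (a N - A) < absv A"
    have "absv (A + (a N - A)) = absv A" by (rule ultra_eq[OF h])
    then have aN: "absv (a N) = absv A" by simp
    then have "a N \<noteq> 0" using pA z by auto
    then have "inverse (a N) - inverse A = (A - a N) / (a N * A)" using assms(2) by (simp add: field_simps)
    then show "absv (inverse (a N) - inverse A) \<le> absv (a N - A) / (absv A * absv A)"
      by (simp add: adiv mu aN acomm)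
  qed
  have t: "(\<lambda>N. absv (a N - A) / (absv A * absv A)) \<longlonglongrightarrow> 0 / (absv A * absv A)"
    using assms(1)[unfolded conv_iff] pA by (intro tendsto_intros) auto
  show ?thesis unfolding conv_iff by (rule sandw[OF ev _ t[simplified]]) (auto simp: nn)
qed

lemma conv_divide: assumes "abs_conv absv a A" "abs_conv absv b B" "B \<noteq> 0"
  shows "abs_conv absv (\<lambda>N. a N / b N) (A / B)"
  using conv_mult[OF assms(1) conv_inverse[OF assms(2,3)]] by (simp add: divide_inverse)

lemma conv_unique: assumes "abs_conv absv a A" "abs_conv absv a B" shows "A = B"
proof -
  have t: "(\<lambda>N. absv (a N - A) + absv (a N - B)) \<longlonglongrightarrow> 0 + 0"
    using assms[unfolded conv_iff] by (intro tendsto_intros)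
  have le: "absv (A - B) \<le> absv (a N - A) + absv (a N - B)" for N
  proof -
    have e: "A - B = (A - a N) + (a N - B)" by simp
    show ?thesis unfolding e using tri[of "A - a N" "a N - B"] acomm[of A "a N"] by simp
  qed
  have "(\<lambda>N. absv (A - B)) \<longlonglongrightarrow> 0"
    by (rule sandw[OF always_eventually _ t[simplified]]) (auto simp: le nn)
  then have "absv (A - B) = 0" using LIMSEQ_const_iff by blast
  then show ?thesis using z by simp
qed

lemma conv_the: assumes "abs_conv absv a A" shows "(THE L. abs_conv absv a L) = A"
  using assms conv_unique by blast

lemma conv_poly: assumes "abs_conv absv a A" shows "abs_conv absv (\<lambda>N. poly F (a N)) (poly F A)"
  by (induction F) (auto intro!: conv_add conv_mult conv_const assms)

end


lemma qnum_0[simp]: "qnum x 0 = 0" by (simp add: qnum_def)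
lemma qnum_Suc: "qnum x (Suc n) = 1 + x * qnum x n"
  unfolding qnum_def sum.lessThan_Suc_shift by (simp add: sum_distrib_left)
lemma qnum_Suc': "qnum x (Suc n) = qnum x n + x ^ n"
  unfolding qnum_def by simp
lemma qnum_add: "qnum x (a + b) = qnum x a + x ^ a * qnum x b"
  by (induction b) (simp_all add: qnum_Suc' algebra_simps power_add)
lemma qnum_mult: "qnum x (m * k) = qnum x m * qnum (x ^ m) k"
proof (induction k)
  case (Suc k)
  have "qnum x (m * Suc k) = qnum x (m + m * k)" by simp
  also have "\<dots> = qnum x m + x ^ m * qnum x (m * k)" by (rule qnum_add)
  finally show ?case using Suc by (simp add: qnum_Suc algebra_simps)
qed simp
lemma pow_minus1: "x ^ n - 1 = (x - 1) * qnum x n"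
proof (induction n)
  case (Suc n)
  have "x ^ Suc n - 1 = x * (x ^ n - 1) + (x - 1)" by (simp add: algebra_simps)
  also have "\<dots> = (x - 1) * qnum x (Suc n)" unfolding Suc qnum_Suc by (simp add: algebra_simps)
  finally show ?case .
qed simp

context cpl begin

lemma qnum_le1: assumes "absv x \<le> 1" shows "absv (qnum x n) \<le> 1"
  unfolding qnum_def by (rule asum) (auto simp: apow assms power_le_one nn)

lemma pow_near: assumes "absv x \<le> 1" shows "absv (x ^ n - 1) \<le> absv (x - 1)"
  unfolding pow_minus1 mu using qnum_le1[OF assms, of n] nn[of "x - 1"]
  by (simp add: mult_left_le)

lemma qnum_p: assumes "absv x \<le> 1"
  shows "absv (qnum x p) \<le> max (absv (x - 1)) (inverse (real p))"
proof -
  have e: "qnum x p = (\<Sum>i<p. x ^ i - 1) + of_nat p"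
    unfolding qnum_def by (simp add: sum_subtractf)
  have "absv (\<Sum>i<p. x ^ i - 1) \<le> absv (x - 1)"
    by (rule asum) (auto simp: pow_near assms nn)
  then show ?thesis unfolding e using ul[of "\<Sum>i<p. x ^ i - 1" "of_nat p"] ap by linarith
qed

lemma qnum_geo: assumes "absv (x - 1) < 1"
  shows "absv (qnum x (p ^ N)) \<le> max (absv (x - 1)) (inverse (real p)) ^ N"
proof (induction N)
  case 0 then show ?case by (simp add: qnum_def)
next
  case (Suc N)
  let ?c = "max (absv (x - 1)) (inverse (real p))"
  have x1: "absv x = 1" by (rule near1[OF assms])
  have "absv (qnum (x ^ p ^ N) p) \<le> max (absv (x ^ p ^ N - 1)) (inverse (real p))"
    by (rule qnum_p) (simp add: apow x1)
  also have "\<dots> \<le> ?c" using pow_near[of x "p ^ N"] x1 by auto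
  finally have h: "absv (qnum (x ^ p ^ N) p) \<le> ?c" .
  have "absv (qnum x (p ^ Suc N)) = absv (qnum x (p ^ N)) * absv (qnum (x ^ p ^ N) p)"
    by (simp add: qnum_mult mu mult.commute[of p])
  also have "\<dots> \<le> ?c ^ N * ?c"
    by (rule mult_mono[OF Suc h]) (auto simp: nn intro!: zero_le_power max.coboundedI1)
  finally show ?case by (simp add: mult.commute)
qed

lemma conv_qnum: assumes "absv (x - 1) < 1"
  shows "abs_conv absv (\<lambda>N. qnum x (p ^ N)) 0"
proof -
  let ?c = "max (absv (x - 1)) (inverse (real p))"
  have c1: "?c < 1" using assms p1 by (auto simp: inverse_less_1_iff)
  have c0: "0 \<le> ?c" using nn[of "x - 1"] by auto
  have t: "(\<lambda>N. ?c ^ N) \<longlonglongrightarrow> 0" by (rule LIMSEQ_power_zero) (use c0 c1 in simp)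
  show ?thesis unfolding conv_iff
    by (rule sandw[OF always_eventually _ t]) (auto simp: qnum_geo[OF assms] nn)
qed

lemma conv_powp: assumes "absv (x - 1) < 1"
  shows "abs_conv absv (\<lambda>N. x ^ (p ^ N)) 1"
proof -
  have "abs_conv absv (\<lambda>N. (x - 1) * qnum x (p ^ N) + 1) ((x - 1) * 0 + 1)"
    by (rule conv_add[OF conv_cmult[OF conv_qnum[OF assms]] conv_const])
  moreover have "x ^ (p ^ N) = (x - 1) * qnum x (p ^ N) + 1" for N
    using pow_minus1[of x "p ^ N"] by (simp add: algebra_simps)
  ultimately show ?thesis by simp
qed

end


lemma eq_add_diff: "(a::'b::ab_group_add) = b + (a - b)" by simp

lemma pcompose_monom1: "pcompose (monom 1 n) q = q ^ n"
  by (induction n) (simp_all add: monom_Suc pcompose_pCons monom_0)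

lemma lowdeg_induct:
  fixes P :: "'a::field poly \<Rightarrow> bool"
  assumes P0: "P 0" and Padd: "\<And>F G. P F \<Longrightarrow> P G \<Longrightarrow> P (F + G)"
    and Psm: "\<And>c F. P F \<Longrightarrow> P (smult c F)"
    and Pmon: "\<And>n. (\<And>R. (\<forall>i\<ge>n. coeff R i = 0) \<Longrightarrow> P R) \<Longrightarrow> P (monom 1 n)"
  shows "P F"
proof -
  have "\<forall>R. (\<forall>i\<ge>n. coeff R i = 0) \<longrightarrow> P R" for n
  proof (induction n)
    case 0
    then show ?case using P0 by (auto intro!: poly_eqI simp del: poly_eq_iff) (metis P0 leading_coeff_0_iff zero_le)
  next
    case (Suc n)
    show ?case
    proof (intro allI impI)
      fix R :: "'a poly" assume h: "\<forall>i\<ge>Suc n. coeff R i = 0"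
      let ?R0 = "R - smult (coeff R n) (monom 1 n)"
      have "\<forall>i\<ge>n. coeff ?R0 i = 0" using h by (auto simp: le_Suc_eq)
      then have "P ?R0" using Suc by blast
      moreover have "P (monom 1 n)" by (rule Pmon) (use Suc in blast)
      ultimately have "P (smult (coeff R n) (monom 1 n) + ?R0)" by (intro Padd Psm)
      then show "P R" by simp
    qed
  qed
  moreover have "\<forall>i\<ge>Suc (degree F). coeff F i = 0" by (auto intro: coeff_eq_0)
  ultimately show ?thesis by blast
qed

locale fint = cpl +
  fixes qq v Q :: "'a::field_char_0"
  assumes hq: "absv (qq - 1) < 1" and hv: "absv (v - 1) < 1" and hQ: "absv (Q - 1) < 1"
begin

definition fs :: "'a poly \<Rightarrow> nat \<Rightarrow> 'a" where
  "fs F \<xi> = v ^ \<xi> * poly F (qnum Q \<xi>)"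

definition num :: "'a poly \<Rightarrow> nat \<Rightarrow> 'a" where
  "num F M = (\<Sum>\<xi><M. fs F \<xi> * (- qq) ^ \<xi>)"

definition Sq :: "'a poly \<Rightarrow> nat \<Rightarrow> 'a" where
  "Sq F N = (\<Sum>\<xi><p ^ N. fs F \<xi> * (- qq) ^ \<xi>) / ((1 + qq ^ (p ^ N)) / (1 + qq))"

definition Phi :: "'a poly \<Rightarrow> 'a" where
  "Phi F = ferm_int p absv qq (fs F)"

definition shp :: "'a poly \<Rightarrow> 'a poly" where
  "shp F = pcompose F [:1, Q:]"

lemma Sq_num: "Sq F N = num F (p ^ N) / ((1 + qq ^ (p ^ N)) / (1 + qq))"
  unfolding Sq_def num_def ..

lemma fs_Suc: "fs F (Suc \<xi>) = v * fs (shp F) \<xi>"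
  unfolding fs_def shp_def by (simp add: poly_pcompose qnum_Suc mult.commute[of Q])

lemma fs_0: "fs F 0 = poly F 0" unfolding fs_def by simp

lemma tele: "num F M + qq * v * num (shp F) M = fs F 0 - fs F M * (- qq) ^ M"
proof (induction M)
  case 0 then show ?case by (simp add: num_def)
next
  case (Suc M)
  have "num F (Suc M) + qq * v * num (shp F) (Suc M) =
     (num F M + qq * v * num (shp F) M) + fs F M * (- qq) ^ M + qq * (v * fs (shp F) M) * (- qq) ^ M"
    by (simp add: num_def algebra_simps)
  also have "\<dots> = fs F 0 - fs F (Suc M) * (- qq) ^ Suc M"
    unfolding Suc fs_Suc[symmetric] by (simp add: algebra_simps)
  finally show ?case .
qed

lemma num_add: "num (F + G) M = num F M + num G M"
  unfolding num_def fs_def by (simp add: algebra_simps sum.distrib)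
lemma num_smult: "num (smult c F) M = c * num F M"
  unfolding num_def fs_def by (simp add: algebra_simps sum_distrib_left)
lemma num_zero: "num 0 M = 0"
  unfolding num_def fs_def by simp

lemma Sq_add: "Sq (F + G) N = Sq F N + Sq G N"
  unfolding Sq_num num_add by (simp add: add_divide_distrib)
lemma Sq_smult: "Sq (smult c F) N = c * Sq F N"
  unfolding Sq_num num_smult by simp
lemma Sq_add': "Sq (F + G) = (\<lambda>N. Sq F N + Sq G N)" by (rule ext) (rule Sq_add)
lemma Sq_smult': "Sq (smult c F) = (\<lambda>N. c * Sq F N)" by (rule ext) (rule Sq_smult)
lemma Sq_zero: "Sq 0 N = 0"
  unfolding Sq_num num_zero by simp

lemma oddM: "odd (p ^ N)" using podd by simp

lemma qq1: "1 + qq \<noteq> 0" using near1_plus[OF hq] by auto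
lemma qqM: "1 + qq ^ M \<noteq> 0" using near1_plus[OF near1_pow[OF hq], of M] a0 by (metis zero_neq_one)

lemma Sq_shift: "Sq F N + qq * v * Sq (shp F) N
   = (1 + qq) * (fs F 0 + fs F (p ^ N) * qq ^ (p ^ N)) / (1 + qq ^ (p ^ N))"
proof -
  have "(- qq) ^ (p ^ N) = - (qq ^ (p ^ N))" using oddM by (simp add: power_minus_odd)
  then have e: "num F (p ^ N) + qq * v * num (shp F) (p ^ N) = fs F 0 + fs F (p ^ N) * qq ^ (p ^ N)"
    using tele[of F "p ^ N"] by simp
  have "Sq F N + qq * v * Sq (shp F) N = (num F (p ^ N) + qq * v * num (shp F) (p ^ N)) / ((1 + qq ^ (p ^ N)) / (1 + qq))"
    unfolding Sq_num by (simp add: add_divide_distrib)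
  also have "\<dots> = (1 + qq) * (fs F 0 + fs F (p ^ N) * qq ^ (p ^ N)) / (1 + qq ^ (p ^ N))"
    unfolding e by (simp add: divide_divide_eq_right mult.commute)
  finally show ?thesis .
qed

lemma rhs_conv: "abs_conv absv (\<lambda>N. (1 + qq) * (fs F 0 + fs F (p ^ N) * qq ^ (p ^ N)) / (1 + qq ^ (p ^ N)))
   ((1 + qq) * poly F 0)"
proof -
  have a: "abs_conv absv (\<lambda>N. fs F (p ^ N)) (1 * poly F 0)"
    unfolding fs_def by (rule conv_mult[OF conv_powp[OF hv] conv_poly[OF conv_qnum[OF hQ]]])
  have "abs_conv absv (\<lambda>N. (1 + qq) * (fs F 0 + fs F (p ^ N) * qq ^ (p ^ N)) / (1 + qq ^ (p ^ N)))
     ((1 + qq) * (fs F 0 + 1 * poly F 0 * 1) / (1 + 1))"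
    by (intro conv_divide conv_cmult conv_add conv_const conv_mult a conv_powp[OF hq]) simp
  then show ?thesis by (simp add: fs_0)
qed

lemma Q0: "Q \<noteq> 0" using near1[OF hQ] by auto

lemma shp_monom: "\<forall>i\<ge>n. coeff (shp (monom 1 n) - smult (Q ^ n) (monom 1 n)) i = 0"
proof (intro allI impI)
  fix i assume "n \<le> i"
  have d: "degree ([:1, Q:] ^ n) = n" using Q0 by (simp add: degree_power_eq)
  have l: "coeff ([:1, Q:] ^ n) n = Q ^ n"
    using lead_coeff_power[of "[:1, Q:]" n] d Q0 by simp
  show "coeff (shp (monom 1 n) - smult (Q ^ n) (monom 1 n)) i = 0"
  proof (cases "i = n")
    case True then show ?thesis by (simp add: shp_def pcompose_monom1 l)
  next
    case False
    then have "i > n" using \<open>n \<le> i\<close> by simp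
    then show ?thesis by (simp add: shp_def pcompose_monom1 coeff_eq_0 d)
  qed
qed

lemma nz_n: "1 + qq * v * Q ^ n \<noteq> 0"
  using near1_plus[OF near1_mult[OF near1_mult[OF hq hv] near1_pow[OF hQ]], of n] a0 by (metis zero_neq_one mult.assoc)

lemma Sq_conv_ex: "\<exists>L. abs_conv absv (Sq F) L"
proof (induction F rule: lowdeg_induct)
  case 1 then show ?case using conv_const[of 0] by (auto simp: Sq_zero)
next
  case (2 F G)
  then obtain A B where "abs_conv absv (Sq F) A" "abs_conv absv (Sq G) B" by blast
  then show ?case unfolding Sq_add' using conv_add by blast
next
  case (3 c F)
  then obtain A where "abs_conv absv (Sq F) A" by blast
  then show ?case unfolding Sq_smult' using conv_cmult by blast
next
  case (4 n)
  let ?G = "monom 1 n :: 'a poly"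
  let ?R = "shp ?G - smult (Q ^ n) ?G"
  obtain LR where LR: "abs_conv absv (Sq ?R) LR" using 4 shp_monom by blast
  have sh: "shp ?G = smult (Q ^ n) ?G + ?R" by (rule eq_add_diff)
  have e: "Sq ?G N = ((1 + qq) * (fs ?G 0 + fs ?G (p ^ N) * qq ^ (p ^ N)) / (1 + qq ^ (p ^ N))
            - qq * v * Sq ?R N) / (1 + qq * v * Q ^ n)" for N
  proof -
    have "Sq (shp ?G) N = Sq (smult (Q ^ n) ?G + ?R) N"
      by (rule arg_cong[where f="\<lambda>F. Sq F N", OF sh])
    then have s2: "Sq (shp ?G) N = Q ^ n * Sq ?G N + Sq ?R N" by (simp only: Sq_add Sq_smult)
    have "Sq ?G N + qq * v * (Q ^ n * Sq ?G N + Sq ?R N) =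
      (1 + qq) * (fs ?G 0 + fs ?G (p ^ N) * qq ^ (p ^ N)) / (1 + qq ^ (p ^ N))"
      using Sq_shift[of ?G N] unfolding s2 .
    then show ?thesis using nz_n[of n] by (simp add: field_simps)
  qed
  have "abs_conv absv (\<lambda>N. ((1 + qq) * (fs ?G 0 + fs ?G (p ^ N) * qq ^ (p ^ N)) / (1 + qq ^ (p ^ N))
            - qq * v * Sq ?R N) / (1 + qq * v * Q ^ n))
         (((1 + qq) * poly ?G 0 - qq * v * LR) / (1 + qq * v * Q ^ n))"
    by (intro conv_divide conv_diff rhs_conv conv_cmult LR conv_const nz_n)
  then show ?case unfolding e[symmetric] by blast
qed

lemma Phi_conv: "abs_conv absv (Sq F) (Phi F)"
proof -
  obtain L where L: "abs_conv absv (Sq F) L" using Sq_conv_ex by blast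
  have "Phi F = L" unfolding Phi_def ferm_int_def using conv_the[OF L[unfolded Sq_def]] .
  then show ?thesis using L by simp
qed

lemma Phi_add: "Phi (F + G) = Phi F + Phi G"
  using conv_unique[OF Phi_conv[of "F + G"]] conv_add[OF Phi_conv[of F] Phi_conv[of G]]
  unfolding Sq_add' by blast

lemma Phi_smult: "Phi (smult c F) = c * Phi F"
  using conv_unique[OF Phi_conv[of "smult c F"]] conv_cmult[OF Phi_conv[of F]]
  unfolding Sq_smult' by blast

lemma Phi_zero: "Phi 0 = 0"
  using Phi_smult[of 0 0] by simp

lemma Phi_diff: "Phi (F - G) = Phi F - Phi G"
  using Phi_add[of "F - G" G] by simp

lemma Phi_sum: "Phi (\<Sum>i\<in>I. smult (c i) (G i)) = (\<Sum>i\<in>I. c i * Phi (G i))"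
  by (induction I rule: infinite_finite_induct) (auto simp: Phi_zero Phi_add Phi_smult)

lemma Phi_shift: "Phi F + qq * v * Phi (shp F) = (1 + qq) * poly F 0"
proof -
  have "abs_conv absv (\<lambda>N. Sq F N + qq * v * Sq (shp F) N) (Phi F + qq * v * Phi (shp F))"
    by (intro conv_add conv_cmult Phi_conv)
  then show ?thesis using conv_unique rhs_conv[of F] unfolding Sq_shift by blast
qed

lemma Phi_cong: assumes "\<And>x. poly F x = poly G x" shows "Phi F = Phi G"
  unfolding Phi_def fs_def using assms by simp

end


context fint begin

lemma uniq:
  assumes add: "\<And>F G. X (F + G) = X F + X G" and sm: "\<And>c F. X (smult c F) = c * X F"
    and sh: "\<And>F. X F + qq * v * X (shp F) = 0"
  shows "X F = 0"
proof (induction F rule: lowdeg_induct)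
  case 1 then show ?case using sm[of 0 0] by simp
next
  case (2 F G) then show ?case by (simp add: add)
next
  case (3 c F) then show ?case by (simp add: sm)
next
  case (4 n)
  let ?G = "monom 1 n :: 'a poly"
  let ?R = "shp ?G - smult (Q ^ n) ?G"
  have XR: "X ?R = 0" using 4 shp_monom by blast
  have "shp ?G = smult (Q ^ n) ?G + ?R" by (rule eq_add_diff)
  then have "X (shp ?G) = Q ^ n * X ?G + X ?R"
    using arg_cong[where f=X] by (metis add sm)
  then have "(1 + qq * v * Q ^ n) * X ?G = 0" using sh[of ?G] XR by (simp add: algebra_simps)
  then show ?case using nz_n[of n] by simp
qed

end

lemma main_identity:
  fixes p :: nat and absv :: "'a::field_char_0 \<Rightarrow> real" and q w Q :: 'a
  assumes A: "fint p absv q w Q" and B: "fint p absv (inverse q) (inverse w) (inverse Q)"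
  shows "fint.Phi p absv q w Q F - q^2 * w * fint.Phi p absv (inverse q) (inverse w) (inverse Q) (pcompose F [:1, -1:])
     = (1 + q) * (poly F 0 - q * w * poly F 1)"
proof -
  interpret A: fint p absv q w Q by (rule A)
  interpret B: fint p absv "inverse q" "inverse w" "inverse Q" by (rule B)
  have q0: "q \<noteq> 0" using A.near1[OF A.hq] by auto
  have w0: "w \<noteq> 0" using A.near1[OF A.hv] by auto
  have Q0: "Q \<noteq> 0" by (rule A.Q0)
  define D where "D F = A.Phi F - q^2 * w * B.Phi (pcompose F [:1, -1:]) - (1 + q) * (poly F 0 - q * w * poly F 1)" for F
  have "D F = 0"
  proof (rule A.uniq)
    show "D (F + G) = D F + D G" for F G
      unfolding D_def by (simp add: A.Phi_add B.Phi_add pcompose_add algebra_simps)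
    show "D (smult c F) = c * D F" for c F
      unfolding D_def by (simp add: A.Phi_smult B.Phi_smult pcompose_smult algebra_simps)
    show "D F + q * w * D (A.shp F) = 0" for F
    proof -
      let ?H = "pcompose F [:1, -1:]"
      let ?H' = "pcompose (A.shp F) [:1, -1:]"
      have a: "A.Phi F + q * w * A.Phi (A.shp F) = (1 + q) * poly F 0" by (rule A.Phi_shift)
      have b0: "B.Phi (B.shp ?H') = B.Phi ?H"
        by (rule B.Phi_cong) (simp add: B.shp_def A.shp_def poly_pcompose Q0 algebra_simps)
      have b: "B.Phi ?H' + inverse q * inverse w * B.Phi ?H = (1 + inverse q) * poly F (1 + Q)"
        using B.Phi_shift[of ?H'] unfolding b0 by (simp add: A.shp_def poly_pcompose)
      have s0: "poly (A.shp F) 0 = poly F 1" by (simp add: A.shp_def poly_pcompose)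
      have s1: "poly (A.shp F) 1 = poly F (1 + Q)" by (simp add: A.shp_def poly_pcompose)
      have bH: "B.Phi ?H = q * w * ((1 + inverse q) * poly F (1 + Q) - B.Phi ?H')"
        using b q0 w0 by (simp add: field_simps)
      have a': "A.Phi F = (1 + q) * poly F 0 - q * w * A.Phi (A.shp F)" using a by (simp add: algebra_simps)
      show ?thesis unfolding D_def s0 s1 bH a'
        using q0 w0 by (simp add: field_simps) (simp add: algebra_simps power2_eq_square)
    qed
  qed
  then show ?thesis unfolding D_def by simp
qed



lemma binom1: "(1 - x) ^ m = (\<Sum>l\<le>m. of_nat (m choose l) * (-1) ^ l * (x::'a::comm_ring_1) ^ l)"
proof -
  have "(1 - x) ^ m = (- x + 1) ^ m" by (simp only: diff_conv_add_uminus add.commute)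
  also have "\<dots> = (\<Sum>l\<le>m. of_nat (m choose l) * (- x) ^ l * 1 ^ (m - l))" by (rule binomial_ring)
  also have "\<dots> = (\<Sum>l\<le>m. of_nat (m choose l) * (-1) ^ l * x ^ l)"
    by (rule sum.cong[OF refl]) (simp only: power_one mult_1_right power_minus[of x] mult.assoc)
  finally show ?thesis .
qed

lemma binom2: "(x - 1) ^ m = (\<Sum>l\<le>m. of_nat (m choose l) * (-1) ^ l * (x::'a::comm_ring_1) ^ (m - l))"
proof -
  have "(x - 1) ^ m = (- 1 + x) ^ m" by (simp only: diff_conv_add_uminus add.commute)
  also have "\<dots> = (\<Sum>l\<le>m. of_nat (m choose l) * (-1) ^ l * x ^ (m - l))" by (rule binomial_ring)
  finally show ?thesis .
qed

theorem mainTheorem7: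
  fixes p :: nat and absv :: "'a::field_char_0 \<Rightarrow> real" and q :: 'a
    and \<alpha> h n1 n2 k :: nat
  assumes "prime p" and "odd p" and "Cp_like p absv"
    and "absv (q - 1) < 1"
    and "h \<ge> 1"
    and "n1 + n2 > 2 * k"
  shows "(\<Sum>l=0..n1 + n2 - 2 * k. of_nat (n1 + n2 - 2 * k choose l) * (-1) ^ l *
            (hq_genocchi p absv \<alpha> h q (l + 2 * k + 1) / of_nat (l + 2 * k + 1))) =
         (if k = 0 then
            (1 + q) + q ^ (h + 1) *
              (hq_genocchi p absv \<alpha> h (inverse q) (n1 + n2 + 1) / of_nat (n1 + n2 + 1))
          else
            (\<Sum>l=0..2 * k. of_nat (2 * k choose l) * (-1) ^ (2 * k + l) *
              ((1 + q) + q ^ (h + 1) *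
                (hq_genocchi p absv \<alpha> h (inverse q) (n1 + n2 - l + 1) / of_nat (n1 + n2 - l + 1)))))"
proof -
  have C: "(\<forall>x. absv x \<ge> 0) \<and> (\<forall>x. absv x = 0 \<longleftrightarrow> x = 0) \<and>
     (\<forall>x y. absv (x * y) = absv x * absv y) \<and>
     (\<forall>x y. absv (x + y) \<le> max (absv x) (absv y)) \<and>
     absv (of_nat p) = inverse (real p)" using assms(3) unfolding Cp_like_def by blast
  have cp: "cpl p absv"
  proof
    show "\<And>x. absv x \<ge> 0" using C by blast
    show "\<And>x. absv x = 0 \<longleftrightarrow> x = 0" using C by blast
    show "\<And>x y. absv (x * y) = absv x * absv y" using C by blast
    show "\<And>x y. absv (x + y) \<le> max (absv x) (absv y)" using C by blast
    show "absv (of_nat p) = inverse (real p)" using C by blast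
    show "p > 1" using assms(1) by (rule prime_gt_1_nat)
    show "odd p" by (rule assms(2))
  qed
  interpret cpl p absv by (rule cp)
  define w where "w = q ^ (h - 1)"
  define Q where "Q = q ^ \<alpha>"
  have hq: "absv (q - 1) < 1" by (rule assms(4))
  have hw: "absv (w - 1) < 1" unfolding w_def by (rule near1_pow[OF hq])
  have hQ: "absv (Q - 1) < 1" unfolding Q_def by (rule near1_pow[OF hq])
  have FA: "fint p absv q w Q" using cp hq hw hQ by (simp add: fint_def fint_axioms_def)
  have FB: "fint p absv (inverse q) (inverse w) (inverse Q)"
    using cp near1_inv[OF hq] near1_inv[OF hw] near1_inv[OF hQ] by (simp add: fint_def fint_axioms_def)
  interpret A: fint p absv q w Q by (rule FA)
  interpret B: fint p absv "inverse q" "inverse w" "inverse Q" by (rule FB)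
  have genA: "hq_genocchi p absv \<alpha> h q (j + 1) / of_nat (j + 1) = A.Phi (monom 1 j)" for j
  proof -
    have "(\<lambda>\<xi>. q ^ ((h - 1) * \<xi>) * qnum (q ^ \<alpha>) \<xi> ^ j) = A.fs (monom 1 j)"
      unfolding A.fs_def by (rule ext) (simp add: w_def Q_def power_mult poly_monom)
    then show ?thesis by (simp add: A.Phi_def del: of_nat_Suc)
  qed
  have genB: "hq_genocchi p absv \<alpha> h (inverse q) (j + 1) / of_nat (j + 1) = B.Phi (monom 1 j)" for j
  proof -
    have "(\<lambda>\<xi>. inverse q ^ ((h - 1) * \<xi>) * qnum (inverse q ^ \<alpha>) \<xi> ^ j) = B.fs (monom 1 j)"
      unfolding B.fs_def by (rule ext) (simp add: w_def Q_def power_mult poly_monom power_inverse)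
    then show ?thesis by (simp add: B.Phi_def del: of_nat_Suc)
  qed
  define m where "m = n1 + n2 - 2 * k"
  have m0: "m > 0" using assms(6) unfolding m_def by simp
  define F0 :: "'a poly" where "F0 = monom 1 (2 * k) * [:1, -1:] ^ m"
  have MI: "A.Phi F0 - q^2 * w * B.Phi (pcompose F0 [:1, -1:]) = (1 + q) * (poly F0 0 - q * w * poly F0 1)"
    by (rule main_identity[OF FA FB])
  have P1: "poly F0 1 = 0" using m0 by (simp add: F0_def poly_monom)
  have P0: "poly F0 0 = (if k = 0 then 1 else 0)" by (simp add: F0_def poly_monom)
  have qh: "q ^ (h + 1) = q ^ 2 * w"
    using assms(5) unfolding w_def by (simp add: power_add[symmetric])
  have LHS: "(\<Sum>l=0..m. of_nat (m choose l) * (-1) ^ l *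
            (hq_genocchi p absv \<alpha> h q (l + 2 * k + 1) / of_nat (l + 2 * k + 1))) = A.Phi F0"
  proof -
    have "A.Phi F0 = A.Phi (\<Sum>l\<in>{0..m}. smult (of_nat (m choose l) * (-1) ^ l) (monom 1 (l + 2 * k)))"
    proof (rule A.Phi_cong)
      fix x
      have "poly F0 x = x ^ (2 * k) * (1 - x) ^ m" by (simp add: F0_def poly_monom)
      also have "\<dots> = (\<Sum>l\<in>{0..m}. of_nat (m choose l) * (-1) ^ l * x ^ (l + 2 * k))"
        unfolding binom1 atLeast0AtMost by (simp add: sum_distrib_left power_add algebra_simps)
      finally show "poly F0 x = poly (\<Sum>l\<in>{0..m}. smult (of_nat (m choose l) * (-1) ^ l) (monom 1 (l + 2 * k))) x"
        by (simp add: poly_sum poly_monom)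
    qed
    also have "\<dots> = (\<Sum>l\<in>{0..m}. of_nat (m choose l) * (-1) ^ l * A.Phi (monom 1 (l + 2 * k)))"
      by (rule A.Phi_sum)
    finally show ?thesis by (simp only: genA)
  qed
  show ?thesis
  proof (cases "k = 0")
    case True
    have "B.Phi (pcompose F0 [:1, -1:]) = B.Phi (monom 1 (n1 + n2))"
      by (rule B.Phi_cong) (simp add: F0_def poly_monom poly_pcompose True m_def)
    then have "B.Phi (pcompose F0 [:1, -1:]) = hq_genocchi p absv \<alpha> h (inverse q) (n1 + n2 + 1) / of_nat (n1 + n2 + 1)"
      by (simp only: genB)
    then show ?thesis using MI P0 P1 LHS True qh unfolding m_def
      by (simp add: algebra_simps)
  next
    case False
    let ?c = "\<lambda>l. of_nat (2 * k choose l) * (-1) ^ (2 * k + l) :: 'a"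
    have BB: "B.Phi (pcompose F0 [:1, -1:]) = (\<Sum>l\<in>{0..2*k}. ?c l * B.Phi (monom 1 (n1 + n2 - l)))"
    proof -
      have "B.Phi (pcompose F0 [:1, -1:]) = B.Phi (\<Sum>l\<in>{0..2*k}. smult (?c l) (monom 1 (n1 + n2 - l)))"
      proof (rule B.Phi_cong)
        fix x :: 'a
        have e1: "(1 - x) ^ (2 * k) = (x - 1) ^ (2 * k)"
          unfolding power_mult by (simp only: power2_commute)
        have "poly (pcompose F0 [:1, -1:]) x = (x - 1) ^ (2 * k) * x ^ m"
          by (simp add: F0_def poly_monom poly_pcompose e1)
        also have "\<dots> = (\<Sum>l\<in>{0..2*k}. ?c l * x ^ (n1 + n2 - l))"
          unfolding binom2 atLeast0AtMost sum_distrib_right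
        proof (rule sum.cong[OF refl])
          fix l assume "l \<in> {..2 * k}"
          then have "l \<le> 2 * k" by simp
          then have "x ^ (2 * k - l) * x ^ m = x ^ (n1 + n2 - l)"
            unfolding m_def power_add[symmetric] using assms(6) by (simp add: algebra_simps)
          then show "of_nat (2 * k choose l) * (- 1) ^ l * x ^ (2 * k - l) * x ^ m = ?c l * x ^ (n1 + n2 - l)"
            by (simp add: power_add mult.assoc)
        qed
        finally show "poly (pcompose F0 [:1, -1:]) x = poly (\<Sum>l\<in>{0..2*k}. smult (?c l) (monom 1 (n1 + n2 - l))) x"
          by (simp add: poly_sum poly_monom)
      qed
      also have "\<dots> = (\<Sum>l\<in>{0..2*k}. ?c l * B.Phi (monom 1 (n1 + n2 - l)))"
        by (rule B.Phi_sum)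
      finally show ?thesis .
    qed
    have alt: "(\<Sum>l\<in>{0..2*k}. ?c l) = 0"
      using choose_alternating_sum[of "2 * k", where 'a='a] False
      unfolding atLeast0AtMost by (simp add: power_add mult.commute)
    have "(\<Sum>l=0..2 * k. ?c l * ((1 + q) + q ^ (h + 1) *
                (hq_genocchi p absv \<alpha> h (inverse q) (n1 + n2 - l + 1) / of_nat (n1 + n2 - l + 1))))
        = (1 + q) * (\<Sum>l\<in>{0..2*k}. ?c l) + q ^ (h + 1) * (\<Sum>l\<in>{0..2*k}. ?c l * B.Phi (monom 1 (n1 + n2 - l)))"
      unfolding genB by (simp add: algebra_simps sum.distrib sum_distrib_left)
    also have "\<dots> = A.Phi F0"
      using MI P0 P1 False qh BB alt by (simp add: algebra_simps)
    finally show ?thesis using LHS False unfolding m_def by simp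
  qed
qed


end
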